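(* Let $\{s_k\}_{k\in\mathbb{N}_0}$ be a positive sequence and let $\{\ell_k\}_{k\in\mathbb{N}_0}$ be a sequence of nonnegative integers such that $\{a^{\ell_k}\}_{k\in\mathbb{N}_0}$ is a positive sequence for every $a\in\mathbb{R}$. Then the sequence $\{\tilde s_k\}_{k\in\mathbb{N}_0}$ given by $\tilde s_k=s_{k+\ell_k}$ is a positive sequence.
   Context: A sequence of real numbers $\{s_k\}_{k\in\mathbb{N}_0}$ is called positive if for every $n\in\mathbb{N}_0$ the Hankel matrix $(s_{i+j})_{i,j=0}^n$ is positive semidefinite. The convention $0^0=1$ is used. *)

theory Defs
  imports Complex_Main
begin

definition psd_matrix :: "nat \<Rightarrow> (nat \<Rightarrow> nat \<Rightarrow> real) \<Rightarrow> bool" where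
  "psd_matrix n M \<longleftrightarrow>
     (\<forall>i\<le>n. \<forall>j\<le>n. M i j = M j i) \<and>
     (\<forall>c :: nat \<Rightarrow> real. (\<Sum>i\<le>n. \<Sum>j\<le>n. c i * M i j * c j) \<ge> 0)"

definition hankel :: "(nat \<Rightarrow> real) \<Rightarrow> nat \<Rightarrow> nat \<Rightarrow> real" where
  "hankel s i j = s (i + j)"

definition positive_seq :: "(nat \<Rightarrow> real) \<Rightarrow> bool" where
  "positive_seq s \<longleftrightarrow> (\<forall>n. psd_matrix n (hankel s))"

end

theory Submission
  imports Defs "HOL-Computational_Algebra.Fundamental_Theorem_Algebra"
begin

definition Lf :: "(nat \<Rightarrow> real) \<Rightarrow> real poly \<Rightarrow> real" where
  "Lf s p = (\<Sum>k\<le>degree p. coeff p k * s k)"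

lemma Lf_eq:
  assumes "degree p \<le> N"
  shows "Lf s p = (\<Sum>k\<le>N. coeff p k * s k)"
  unfolding Lf_def
  by (rule sum.mono_neutral_left) (use assms in \<open>auto simp: coeff_eq_0\<close>)

lemma Lf_add: "Lf s (p + q) = Lf s p + Lf s q"
proof -
  let ?N = "max (degree p) (degree q)"
  have "Lf s (p + q) = (\<Sum>k\<le>?N. coeff (p+q) k * s k)"
    by (rule Lf_eq) (simp add: degree_add_le)
  also have "\<dots> = (\<Sum>k\<le>?N. coeff p k * s k) + (\<Sum>k\<le>?N. coeff q k * s k)"
    by (simp add: algebra_simps sum.distrib)
  also have "\<dots> = Lf s p + Lf s q"
    using Lf_eq[of p ?N s] Lf_eq[of q ?N s] by simp
  finally show ?thesis .
qed

lemma Lf_zero: "Lf s 0 = 0"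
  by (simp add: Lf_def)

lemma Lf_sum: "finite A \<Longrightarrow> Lf s (\<Sum>i\<in>A. f i) = (\<Sum>i\<in>A. Lf s (f i))"
  by (induction A rule: finite_induct) (auto simp: Lf_zero Lf_add)

lemma Lf_monom: "Lf s (monom c m) = c * s m"
proof -
  have "Lf s (monom c m) = (\<Sum>k\<le>m. coeff (monom c m) k * s k)"
    by (rule Lf_eq) (simp add: degree_monom_le)
  also have "\<dots> = c * s m"
  proof -
    have "(\<Sum>k\<le>m. coeff (monom c m) k * s k) = (\<Sum>k\<le>m. if k = m then c * s m else 0)"
      by (rule sum.cong) (auto simp: coeff_monom)
    then show ?thesis by simp
  qed
  finally show ?thesis .
qed

lemma Lf_square:
  assumes "positive_seq s"
  shows "Lf s (g * g) \<ge> 0"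
proof -
  let ?n = "degree g"
  have g: "g = (\<Sum>i\<le>?n. monom (coeff g i) i)"
    by (simp add: poly_as_sum_of_monoms)
  have "g * g = (\<Sum>i\<le>?n. monom (coeff g i) i) * (\<Sum>j\<le>?n. monom (coeff g j) j)"
    using g by simp
  also have "\<dots> = (\<Sum>i\<le>?n. \<Sum>j\<le>?n. monom (coeff g i * coeff g j) (i + j))"
    by (simp add: sum_product mult_monom)
  finally have "Lf s (g * g) = (\<Sum>i\<le>?n. \<Sum>j\<le>?n. coeff g i * coeff g j * s (i + j))"
    by (simp add: Lf_sum Lf_monom)
  also have "\<dots> = (\<Sum>i\<le>?n. \<Sum>j\<le>?n. coeff g i * hankel s i j * coeff g j)"
    by (simp add: hankel_def algebra_simps)
  also have "\<dots> \<ge> 0"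
  proof -
    have "\<forall>d. (\<Sum>i\<le>?n. \<Sum>j\<le>?n. d i * hankel s i j * d j) \<ge> 0"
      using assms unfolding positive_seq_def psd_matrix_def by blast
    then show ?thesis by (rule spec[where x="coeff g"])
  qed
  finally show ?thesis by simp
qed

lemma poly_min_exists:
  fixes p :: "real poly"
  shows "\<exists>x0. \<forall>x. \<bar>poly p x0\<bar> \<le> \<bar>poly p x\<bar>"
proof (cases "degree p = 0")
  case True
  then obtain c where "p = [:c:]" by (metis degree_eq_zeroE)
  then show ?thesis by auto
next
  case False
  obtain a q where pq: "p = pCons a q" by (cases p) auto
  with False have "q \<noteq> 0" by auto
  from poly_infinity[OF this, of "\<bar>poly p 0\<bar>" a] obtain r where
    r: "\<And>z::real. r \<le> norm z \<Longrightarrow> \<bar>poly p 0\<bar> \<le> norm (poly p z)" using pq by blast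
  let ?R = "\<bar>r\<bar>"
  have "continuous_on {-?R..?R} (\<lambda>x. \<bar>poly p x\<bar>)"
    by (intro continuous_intros)
  from continuous_attains_inf[OF compact_Icc _ this] obtain x0 where
    x0: "x0 \<in> {-?R..?R}" "\<And>y. y \<in> {-?R..?R} \<Longrightarrow> \<bar>poly p x0\<bar> \<le> \<bar>poly p y\<bar>"
    by auto
  have "\<forall>x. \<bar>poly p x0\<bar> \<le> \<bar>poly p x\<bar>"
  proof
    fix x
    show "\<bar>poly p x0\<bar> \<le> \<bar>poly p x\<bar>"
    proof (cases "x \<in> {-?R..?R}")
      case True then show ?thesis using x0 by auto
    next
      case False
      then have "r \<le> norm x" by auto
      then have "\<bar>poly p 0\<bar> \<le> \<bar>poly p x\<bar>" using r by auto
      moreover have "\<bar>poly p x0\<bar> \<le> \<bar>poly p 0\<bar>" using x0(2)[of 0] by auto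
      ultimately show ?thesis by linarith
    qed
  qed
  then show ?thesis by blast
qed

lemma sq_scale:
  fixes r :: "'a::comm_ring_1"
  shows "r * r * sum_list (map (\<lambda>g. g * g) gs) = sum_list (map (\<lambda>g. g * g) (map (\<lambda>g. r * g) gs))"
proof (induction gs)
  case Nil then show ?case by simp
next
  case (Cons a gs)
  have "r * r * sum_list (map (\<lambda>g. g * g) (a # gs)) = r * r * (a * a) + r * r * sum_list (map (\<lambda>g. g * g) gs)"
    by (simp add: distrib_left)
  also have "r * r * (a * a) = (r * a) * (r * a)" by (simp only: mult_ac)
  finally show ?case using Cons by simp
qed

lemma sos:
  fixes p :: "real poly"
  assumes "\<And>x. poly p x \<ge> 0"
  shows "\<exists>gs. p = sum_list (map (\<lambda>g. g * g) gs)"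
  using assms
proof (induction "degree p" arbitrary: p rule: less_induct)
  case less
  note nn = less.prems
  obtain x0 where x0: "\<And>x. \<bar>poly p x0\<bar> \<le> \<bar>poly p x\<bar>"
    using poly_min_exists by blast
  have mn: "\<And>x. poly p x0 \<le> poly p x" using x0 nn by (metis abs_of_nonneg)
  define \<mu> where "\<mu> = poly p x0"
  have \<mu>0: "\<mu> \<ge> 0" using nn \<mu>_def by simp
  have "poly (pderiv p) x0 = 0"
    using DERIV_local_min[OF poly_DERIV[of p x0], of 1] mn by auto
  have "poly (p - [:\<mu>:]) x0 = 0" by (simp add: \<mu>_def)
  then obtain q where q: "p - [:\<mu>:] = [:-x0, 1:] * q"
    by (meson dvdE poly_eq_0_iff_dvd)
  have "pderiv p = pderiv (p - [:\<mu>:])" by (simp add: pderiv_diff)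
  also have "\<dots> = q + [:-x0, 1:] * pderiv q"
    by (simp only: q pderiv_mult) (simp add: pderiv_pCons)
  finally have "poly q x0 = 0" using \<open>poly (pderiv p) x0 = 0\<close> by simp
  then obtain h where h: "q = [:-x0, 1:] * h"
    by (meson dvdE poly_eq_0_iff_dvd)
  have ph: "p = [:\<mu>:] + [:-x0, 1:] * [:-x0, 1:] * h"
  proof -
    have "p = [:\<mu>:] + (p - [:\<mu>:])" by simp
    also have "\<dots> = [:\<mu>:] + [:-x0, 1:] * ([:-x0, 1:] * h)" by (simp only: q h)
    finally show ?thesis by (simp only: mult.assoc)
  qed
  have hpos: "\<And>x. x \<noteq> x0 \<Longrightarrow> poly h x \<ge> 0"
  proof -
    fix x assume "x \<noteq> x0"
    have "poly p x - \<mu> = (x - x0)^2 * poly h x"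
      by (subst ph) (simp add: power2_eq_square algebra_simps)
    moreover have "poly p x - \<mu> \<ge> 0" using mn \<mu>_def by auto
    moreover have "(x - x0)^2 > 0" using \<open>x \<noteq> x0\<close> by simp
    ultimately show "poly h x \<ge> 0" by (simp add: zero_le_mult_iff)
  qed
  have hnn: "\<And>x. poly h x \<ge> 0"
  proof -
    fix x
    show "poly h x \<ge> 0"
    proof (cases "x = x0")
      case False then show ?thesis using hpos by auto
    next
      case True
      have "(poly h \<longlongrightarrow> poly h x0) (at x0)"
        by (simp add: isCont_def[symmetric])
      moreover have "eventually (\<lambda>y. 0 \<le> poly h y) (at x0)"
        unfolding eventually_at using hpos by (intro exI[of _ 1]) auto
      ultimately have "0 \<le> poly h x0"
        by (rule tendsto_lowerbound) simp
      then show ?thesis using True by simp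
    qed
  qed
  show ?case
  proof (cases "h = 0")
    case True
    then have "p = [:sqrt \<mu>:] * [:sqrt \<mu>:]" using ph \<mu>0 by simp
    then show ?thesis by (intro exI[of _ "[[:sqrt \<mu>:]]"]) simp
  next
    case False
    have "degree ([:-x0, 1:] * [:-x0, 1:] * h) = degree h + 2"
    proof -
      define r where "r = [:-x0, 1::real:]"
      have r1: "degree r = 1" "r \<noteq> 0" by (simp_all add: r_def)
      have "r * r \<noteq> 0" using r1 by simp
      then have "degree (r * r * h) = degree (r * r) + degree h" using False by (rule degree_mult_eq)
      also have "degree (r * r) = 2" using r1 degree_mult_eq[of r r] by simp
      finally show ?thesis unfolding r_def by simp
    qed
    moreover have "degree ([:-x0, 1:] * [:-x0, 1:] * h) \<le> degree p"
    proof -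
      have "[:-x0, 1:] * [:-x0, 1:] * h = p - [:\<mu>:]" using ph by simp
      then show ?thesis using degree_diff_le_max[of p "[:\<mu>:]"] by simp
    qed
    ultimately have "degree h < degree p" by linarith
    from less.hyps[OF this hnn] obtain gs where gs: "h = sum_list (map (\<lambda>g. g * g) gs)" by blast
    have "[:-x0, 1:] * [:-x0, 1:] * h = sum_list (map (\<lambda>g. g * g) (map (\<lambda>g. [:-x0, 1:] * g) gs))"
      unfolding gs by (rule sq_scale)
    then have "p = sum_list (map (\<lambda>g. g * g) ([:sqrt \<mu>:] # map (\<lambda>g. [:-x0, 1:] * g) gs))"
      using ph \<mu>0 by simp
    then show ?thesis by blast
  qed
qed

lemma Lf_sos:
  assumes "positive_seq s"
  shows "Lf s (sum_list (map (\<lambda>g. g * g) gs)) \<ge> 0"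
  by (induction gs) (simp_all add: Lf_zero Lf_add Lf_square[OF assms])

theorem mainTheorem4:
  fixes s :: "nat \<Rightarrow> real" and l :: "nat \<Rightarrow> nat"
  assumes "positive_seq s"
    and "\<And>a :: real. positive_seq (\<lambda>k. a ^ l k)"
  shows "positive_seq (\<lambda>k. s (k + l k))"
  unfolding positive_seq_def psd_matrix_def
proof (intro allI conjI impI)
  fix n i j :: nat
  show "hankel (\<lambda>k. s (k + l k)) i j = hankel (\<lambda>k. s (k + l k)) j i"
    by (simp add: hankel_def add.commute)
next
  fix n :: nat and c :: "nat \<Rightarrow> real"
  define P where "P = (\<Sum>i\<le>n. \<Sum>j\<le>n. monom (c i * c j) (i + j + l (i + j)))"
  have "\<And>a. poly P a \<ge> 0"
  proof -
    fix a :: real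
    have "poly P a = (\<Sum>i\<le>n. \<Sum>j\<le>n. c i * c j * a ^ (i + j + l (i + j)))"
      unfolding P_def by (simp add: poly_sum poly_monom)
    also have "\<dots> = (\<Sum>i\<le>n. \<Sum>j\<le>n. (c i * a ^ i) * hankel (\<lambda>k. a ^ l k) i j * (c j * a ^ j))"
      unfolding hankel_def by (simp add: power_add mult_ac)
    also have "\<dots> \<ge> 0"
    proof -
      have "\<forall>d. (\<Sum>i\<le>n. \<Sum>j\<le>n. d i * hankel (\<lambda>k. a ^ l k) i j * d j) \<ge> 0"
        using assms(2)[of a] unfolding positive_seq_def psd_matrix_def by blast
      then show ?thesis by (rule spec[where x="\<lambda>i. c i * a ^ i"])
    qed
    finally show "poly P a \<ge> 0" .
  qed
  then obtain gs where "P = sum_list (map (\<lambda>g. g * g) gs)" using sos by blast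
  then have "Lf s P \<ge> 0" using Lf_sos[OF assms(1)] by simp
  moreover have "Lf s P = (\<Sum>i\<le>n. \<Sum>j\<le>n. c i * hankel (\<lambda>k. s (k + l k)) i j * c j)"
    unfolding P_def hankel_def
    by (simp add: Lf_sum Lf_monom mult_ac)
  ultimately show "(\<Sum>i\<le>n. \<Sum>j\<le>n. c i * hankel (\<lambda>k. s (k + l k)) i j * c j) \<ge> 0" by simp
qed

end
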